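(* Suppose $0<\delta < \pi/g$. Then for every $\vec \theta \in R_{\delta}^B$ we have $|\Phi(\vec \theta)| \leq 1 - \frac{11}{48} g^{-k} \left( \frac{\delta}{2} \right)^2$.
   Context: Let $g\ge 2$, $k\ge 2$ be integers, $\mathbb Z_g$ the integers mod $g$, and $d=\binom{k}{2}(g-1)$. Index the coordinates of $\mathbb R^d$ by pairs $(\{i,j\},a)$ with $1\le i<j\le k$ and $a\in\mathbb Z_g\setminus\{0\}$. Define $Z:(\mathbb Z_g)^k\to\mathbb R^d$ by $[Z(\vec x)]_{\{i,j\},a}=1-1/g$ if $x_i-x_j=a$ and $-1/g$ otherwise. Define $\Phi(\vec\theta)=\sum_{\vec x\in(\mathbb Z_g)^k} g^{-k}e^{i\vec\theta\cdot Z(\vec x)}$. For $\vec\theta\in[-\pi,\pi)^d$ and $\delta>0$ let $B_\delta(\vec\theta)=\{\vec\mu\in[-\pi,\pi)^d: \vec\mu\equiv\vec\theta+\vec\zeta \pmod{2\pi}$ componentwise, for some $\vec\zeta$ with $|\zeta_{\{i,j\},a}|<\delta$ for all coordinates$\}$. Let $L=\{\vec\theta\in[-\pi,\pi)^d: \theta_{\{i,j\},a}\equiv 0 \pmod{2\pi/g}$ for all coordinates$\}$ and $R_\delta^B=[-\pi,\pi)^d\setminus\bigcup_{\vec\eta\in L}B_\delta(\vec\eta)$. *)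

theory Defs
  imports "HOL-Analysis.Analysis"
begin

text \<open>Coordinates (\{i,j\},a) with 1 \<le> i < j \<le> k and a \<in> Z_g \ {0},
  encoded as triples (i,j,a) with a \<in> {1..g-1} (residue representatives).\<close>
definition coords :: "nat \<Rightarrow> nat \<Rightarrow> (nat \<times> nat \<times> nat) set" where
  "coords g k = {(i,j,a). 1 \<le> i \<and> i < j \<and> j \<le> k \<and> 1 \<le> a \<and> a < g}"

definition points :: "nat \<Rightarrow> nat \<Rightarrow> (nat \<Rightarrow> int) set" where
  "points g k = PiE {1..k} (\<lambda>_. {0..<int g})"

definition Zvec :: "nat \<Rightarrow> (nat \<Rightarrow> int) \<Rightarrow> nat \<times> nat \<times> nat \<Rightarrow> real" where
  "Zvec g x c = (case c of (i,j,a) \<Rightarrow>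
      if (x i - x j) mod int g = int a then 1 - 1 / real g else - 1 / real g)"

definition Phi :: "nat \<Rightarrow> nat \<Rightarrow> (nat \<times> nat \<times> nat \<Rightarrow> real) \<Rightarrow> complex" where
  "Phi g k \<theta> = (\<Sum>x\<in>points g k. complex_of_real (1 / real g ^ k) *
      cis (\<Sum>c\<in>coords g k. \<theta> c * Zvec g x c))"

definition box_d :: "nat \<Rightarrow> nat \<Rightarrow> (nat \<times> nat \<times> nat \<Rightarrow> real) set" where
  "box_d g k = {\<theta>. \<forall>c\<in>coords g k. -pi \<le> \<theta> c \<and> \<theta> c < pi}"

definition Bdelta :: "nat \<Rightarrow> nat \<Rightarrow> real \<Rightarrow> (nat \<times> nat \<times> nat \<Rightarrow> real) \<Rightarrow> (nat \<times> nat \<times> nat \<Rightarrow> real) set" where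
  "Bdelta g k \<delta> \<theta> = {\<mu> \<in> box_d g k. \<exists>\<zeta>. (\<forall>c\<in>coords g k. \<bar>\<zeta> c\<bar> < \<delta> \<and>
      (\<exists>m::int. \<mu> c = \<theta> c + \<zeta> c + 2 * pi * real_of_int m))}"

definition Lset :: "nat \<Rightarrow> nat \<Rightarrow> (nat \<times> nat \<times> nat \<Rightarrow> real) set" where
  "Lset g k = {\<eta> \<in> box_d g k. \<forall>c\<in>coords g k. \<exists>n::int. \<eta> c = real_of_int n * (2 * pi / real g)}"

definition RB :: "nat \<Rightarrow> nat \<Rightarrow> real \<Rightarrow> (nat \<times> nat \<times> nat \<Rightarrow> real) set" where
  "RB g k \<delta> = box_d g k - (\<Union>\<eta>\<in>Lset g k. Bdelta g k \<delta> \<eta>)"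

end

theory Submission
  imports Defs
begin

lemma one_minus_cos_bound:
  fixes d :: real assumes "0 \<le> d" "d \<le> 1"
  shows "11/48 * d^2 \<le> 1 - cos d"
proof -
  define y where "y = d/2"
  have y: "0 \<le> y" "y \<le> 1/2" using assms by (auto simp: y_def)
  have "\<bar>sin y - (\<Sum>m<3. sin_coeff m * y ^ m)\<bar> \<le> inverse (fact 3) * \<bar>y\<bar> ^ 3"
    by (rule Maclaurin_sin_bound)
  moreover have "(\<Sum>m<3. sin_coeff m * y ^ m) = y"
    by (simp add: sin_coeff_def numeral_3_eq_3)
  moreover have "inverse (fact 3) * \<bar>y\<bar> ^ 3 = y^3/6" using y by (simp add: numeral_3_eq_3)
  ultimately have "\<bar>sin y - y\<bar> \<le> y^3/6" by simp
  hence "- (sin y - y) \<le> y^3/6" by (rule abs_le_D2)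
  hence s1: "sin y \<ge> y - y^3/6" by linarith
  have yy: "y*y \<le> 1/4" using y mult_mono[of y "1/2" y "1/2"] by simp
  have "y*(y*y) \<le> y*(1/4)" using yy y by (intro mult_left_mono) auto
  hence "y^3/6 \<le> y/24" by (simp add: power3_eq_cube)
  hence s2: "sin y \<ge> 23/24 * y" using s1 by linarith
  have "(23/24*y)^2 \<le> (sin y)^2" using s2 y by (intro power_mono) auto
  moreover have "cos d = 1 - 2 * sin y ^ 2" using cos_double_sin[of y] by (simp add: y_def)
  ultimately have "1 - cos d \<ge> 2*(23/24*y)^2" by linarith
  moreover have "2*(23/24*y)^2 = (529/1152)*d^2" by (simp add: y_def power2_eq_square)
  ultimately show ?thesis using mult_nonneg_nonneg[of d d] assms unfolding power2_eq_square by linarith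
qed

lemma cos_far:
  fixes t d :: real assumes "0 \<le> d" "d \<le> pi" "\<forall>m::int. d \<le> \<bar>t - 2*pi*m\<bar>"
  shows "cos t \<le> cos d"
proof -
  define m where "m = round (t/(2*pi))"
  have r: "\<bar>real_of_int m - t/(2*pi)\<bar> \<le> 1/2" unfolding m_def by (rule of_int_round_abs_le)
  define u where "u = t - 2*pi*m"
  have "\<bar>u\<bar> \<le> pi"
  proof -
    have "u = -(2*pi)*(real_of_int m - t/(2*pi))" unfolding u_def
      by (simp add: field_simps)
    hence "\<bar>u\<bar> = 2*pi*\<bar>real_of_int m - t/(2*pi)\<bar>" by (simp add: abs_mult)
    also have "\<dots> \<le> 2*pi*(1/2)" using r by (intro mult_left_mono) auto
    finally show ?thesis by simp
  qed
  moreover have "d \<le> \<bar>u\<bar>" using assms(3) u_def by auto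
  ultimately have "cos \<bar>u\<bar> \<le> cos d" using assms by (intro cos_monotone_0_pi_le) auto
  moreover have "cos t = cos u" unfolding u_def
    using cos_int_2pin[of m] sin_int_2pin[of m] by (simp add: cos_diff)
  moreover have "cos \<bar>u\<bar> = cos u" by (simp add: abs_if)
  ultimately show ?thesis by simp
qed

definition phase :: "nat \<Rightarrow> nat \<Rightarrow> (nat \<times> nat \<times> nat \<Rightarrow> real) \<Rightarrow> (nat \<Rightarrow> int) \<Rightarrow> real" where
  "phase g k \<theta> x = (\<Sum>c\<in>coords g k. \<theta> c * Zvec g x c)"

definition pt :: "nat \<Rightarrow> nat \<Rightarrow> nat \<Rightarrow> int \<Rightarrow> int \<Rightarrow> nat \<Rightarrow> int" where
  "pt k i0 j0 u v = (\<lambda>l. if l \<in> {1..k} then (if l = i0 then u else if l = j0 then v else 0) else undefined)"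

lemma finite_coords: "finite (coords g k)"
proof -
  have "coords g k \<subseteq> {0..k} \<times> {0..k} \<times> {0..g}" by (auto simp: coords_def)
  thus ?thesis by (rule finite_subset) auto
qed

lemma pt_in: "0 \<le> u \<Longrightarrow> u < int g \<Longrightarrow> 0 \<le> v \<Longrightarrow> v < int g \<Longrightarrow> pt k i0 j0 u v \<in> points g k"
  by (auto simp: points_def pt_def PiE_def extensional_def)

lemma sum_shift:
  fixes G a :: int and h :: "int \<Rightarrow> real"
  assumes "0 < G"
  shows "(\<Sum>t\<in>{0..<G}. h ((a + t) mod G)) = (\<Sum>t\<in>{0..<G}. h t)"
proof -
  have "bij_betw (\<lambda>t. (a+t) mod G) {0..<G} {0..<G}"
  proof (rule bij_betw_byWitness[where f'="\<lambda>s. (s - a) mod G"])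
    show "\<forall>x\<in>{0..<G}. (((a + x) mod G) - a) mod G = x"
      by (auto simp: mod_diff_left_eq)
    show "\<forall>y\<in>{0..<G}. (a + (y - a) mod G) mod G = y"
      by (auto simp: mod_add_right_eq)
    show "(\<lambda>t. (a + t) mod G) ` {0..<G} \<subseteq> {0..<G}" using assms by auto
    show "(\<lambda>s. (s - a) mod G) ` {0..<G} \<subseteq> {0..<G}" using assms by auto
  qed
  thus ?thesis by (rule sum.reindex_bij_betw)
qed

lemma Zvec_pt:
  assumes "i \<in> {1..k}" "j \<in> {1..k}"
  shows "Zvec g (pt k i0 j0 u v) (i,j,b) =
    (if ((if i = i0 then u else if i = j0 then v else 0) - (if j = i0 then u else if j = j0 then v else 0)) mod int g = int b
     then 1 - 1/real g else -1/real g)"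
  using assms by (simp add: Zvec_def pt_def)


lemma Zvec_pt_pair:
  assumes "1 \<le> i0" "i0 < j0" "j0 \<le> k"
  shows "Zvec g (pt k i0 j0 u v) (i0,j0,b) = (if (u - v) mod int g = int b then 1 - 1/real g else -1/real g)"
  using assms by (simp add: Zvec_pt)

lemma D_lemma:
  assumes g: "g \<ge> 2" and c: "(i0,j0,a) \<in> coords g k" and c': "c' \<in> coords g k"
  shows "(\<Sum>t\<in>{0..<int g}. Zvec g (pt k i0 j0 ((int a + t) mod int g) t) c')
       - (\<Sum>t\<in>{0..<int g}. Zvec g (pt k i0 j0 t t) c') = (if c' = (i0,j0,a) then real g else 0)"
proof -
  obtain i j b where cc: "c' = (i,j,b)" by (cases c') auto
  have ij: "1 \<le> i" "i < j" "j \<le> k" "1 \<le> b" "b < g" using c' cc by (auto simp: coords_def)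
  have ij0: "1 \<le> i0" "i0 < j0" "j0 \<le> k" "1 \<le> a" "a < g" using c by (auto simp: coords_def)
  have ik: "i \<in> {1..k}" "j \<in> {1..k}" using ij by auto
  consider (eq) "c' = (i0,j0,a)" | (same) "i = i0" "j = j0" "b \<noteq> a" | (none) "i \<noteq> i0" "j \<noteq> i0"
    | (one) "i = i0 \<or> j = i0" "i \<noteq> j0" "j \<noteq> j0"
    using cc ij ij0 by force
  then show ?thesis
  proof cases
    case eq
    have X: "Zvec g (pt k i0 j0 ((int a + t) mod int g) t) c' = 1 - 1/real g" if "t \<in> {0..<int g}" for t
    proof -
      have "((int a + t) mod int g - t) mod int g = int a mod int g"
        by (simp add: mod_diff_left_eq)
      also have "\<dots> = int a" using ij0 by simp
      finally have m: "((int a + t) mod int g - t) mod int g = int a" .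
      show ?thesis unfolding eq Zvec_pt_pair[OF ij0(1-3)] m by simp
    qed
    have Y: "Zvec g (pt k i0 j0 t t) c' = - 1/real g" if "t \<in> {0..<int g}" for t
      using eq cc ij0 ik by (simp add: Zvec_pt)
    have "(\<Sum>t\<in>{0..<int g}. Zvec g (pt k i0 j0 ((int a + t) mod int g) t) c') = (\<Sum>t\<in>{0..<int g}. 1 - 1/real g)"
      by (rule sum.cong) (auto simp: X)
    moreover have "(\<Sum>t\<in>{0..<int g}. Zvec g (pt k i0 j0 t t) c') = (\<Sum>t\<in>{0..<int g}. - 1/real g)"
      by (rule sum.cong) (auto simp: Y)
    ultimately have "(\<Sum>t\<in>{0..<int g}. Zvec g (pt k i0 j0 ((int a + t) mod int g) t) c')
       - (\<Sum>t\<in>{0..<int g}. Zvec g (pt k i0 j0 t t) c') = real g * (1 - 1/real g) - real g * (- 1/real g)"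
      by simp
    also have "\<dots> = real g" using g by (simp add: field_simps)
    finally show ?thesis using eq by simp
  next
    case same
    have X: "Zvec g (pt k i0 j0 ((int a + t) mod int g) t) c' = - 1/real g" if "t \<in> {0..<int g}" for t
    proof -
      have "((int a + t) mod int g - t) mod int g = int a mod int g"
        by (simp add: mod_diff_left_eq)
      also have "\<dots> = int a" using ij0 by simp
      finally have m: "((int a + t) mod int g - t) mod int g = int a" .
      show ?thesis unfolding cc same(1,2) Zvec_pt_pair[OF ij0(1-3)] m using same(3) by simp
    qed
    have Y: "Zvec g (pt k i0 j0 t t) c' = - 1/real g" if "t \<in> {0..<int g}" for t
      using same cc ij0 ij ik by (simp add: Zvec_pt)
    have "(\<Sum>t\<in>{0..<int g}. Zvec g (pt k i0 j0 ((int a + t) mod int g) t) c') = (\<Sum>t\<in>{0..<int g}. - 1/real g)"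
      by (rule sum.cong) (auto simp: X)
    moreover have "(\<Sum>t\<in>{0..<int g}. Zvec g (pt k i0 j0 t t) c') = (\<Sum>t\<in>{0..<int g}. - 1/real g)"
      by (rule sum.cong) (auto simp: Y)
    ultimately show ?thesis using same cc by simp
  next
    case none
    have "Zvec g (pt k i0 j0 ((int a + t) mod int g) t) c' = Zvec g (pt k i0 j0 t t) c'" for t
      using none cc ik by (simp add: Zvec_pt)
    thus ?thesis using none cc by simp
  next
    case one
    define F where "F u = Zvec g (pt k i0 j0 u 0) c'" for u
    have FF: "Zvec g (pt k i0 j0 u v) c' = F u" for u v
      using one cc ik ij0 by (auto simp: F_def Zvec_pt)
    have "(\<Sum>t\<in>{0..<int g}. F ((int a + t) mod int g)) = (\<Sum>t\<in>{0..<int g}. F t)"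
      by (rule sum_shift) (use g in simp)
    thus ?thesis unfolding FF using one cc by auto
  qed
qed

lemma key_identity:
  assumes g: "g \<ge> 2" and c: "(i0,j0,a) \<in> coords g k"
  shows "(\<Sum>t\<in>{0..<int g}. phase g k \<theta> (pt k i0 j0 ((int a + t) mod int g) t))
       - (\<Sum>t\<in>{0..<int g}. phase g k \<theta> (pt k i0 j0 t t)) = real g * \<theta> (i0,j0,a)"
proof -
  have "(\<Sum>t\<in>{0..<int g}. phase g k \<theta> (pt k i0 j0 ((int a + t) mod int g) t))
       - (\<Sum>t\<in>{0..<int g}. phase g k \<theta> (pt k i0 j0 t t))
     = (\<Sum>c'\<in>coords g k. \<theta> c' * ((\<Sum>t\<in>{0..<int g}. Zvec g (pt k i0 j0 ((int a + t) mod int g) t) c')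
       - (\<Sum>t\<in>{0..<int g}. Zvec g (pt k i0 j0 t t) c')))"
    unfolding phase_def
    by (simp add: sum.swap[of _ "{0..<int g}"] sum_subtractf[symmetric] sum_distrib_left right_diff_distrib)
  also have "\<dots> = (\<Sum>c'\<in>coords g k. \<theta> c' * (if c' = (i0,j0,a) then real g else 0))"
    by (rule sum.cong[OF refl]) (simp add: D_lemma[OF g c])
  also have "\<dots> = real g * \<theta> (i0,j0,a)"
    using c finite_coords by (simp add: if_distrib sum.delta' cong: if_cong)
  finally show ?thesis .
qed


lemma near_lattice:
  assumes g: "g \<ge> 2" and c: "c \<in> coords g k"
    and H: "\<forall>x\<in>points g k. \<exists>m::int. \<bar>phase g k \<theta> x - \<omega> - 2*pi*m\<bar> < d"
  shows "\<exists>n::int. \<exists>\<zeta>. \<exists>m::int. -pi \<le> n*(2*pi/real g) \<and> n*(2*pi/real g) < pi \<and> \<bar>\<zeta>\<bar> < 2*d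
           \<and> \<theta> c = n*(2*pi/real g) + \<zeta> + 2*pi*m"
proof -
  obtain i0 j0 a where cc: "c = (i0,j0,a)" by (cases c) auto
  define G where "G = int g"
  have G: "G > 0" using g by (simp add: G_def)
  define X where "X t = pt k i0 j0 ((int a + t) mod G) t" for t
  define Y where "Y t = pt k i0 j0 t t" for t
  have Xin: "X t \<in> points g k" if "t \<in> {0..<G}" for t
    using that G unfolding X_def G_def by (intro pt_in) auto
  have Yin: "Y t \<in> points g k" if "t \<in> {0..<G}" for t
    using that unfolding Y_def G_def by (intro pt_in) auto
  have hX: "\<forall>t\<in>{0..<G}. \<exists>m::int. \<bar>phase g k \<theta> (X t) - \<omega> - 2*pi*m\<bar> < d" using H Xin by blast
  from bchoice[OF hX] obtain mX :: "int \<Rightarrow> int" where mX: "\<forall>t\<in>{0..<G}. \<bar>phase g k \<theta> (X t) - \<omega> - 2*pi*mX t\<bar> < d"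
    by blast
  have hY: "\<forall>t\<in>{0..<G}. \<exists>m::int. \<bar>phase g k \<theta> (Y t) - \<omega> - 2*pi*m\<bar> < d" using H Yin by blast
  from bchoice[OF hY] obtain mY :: "int \<Rightarrow> int" where mY: "\<forall>t\<in>{0..<G}. \<bar>phase g k \<theta> (Y t) - \<omega> - 2*pi*mY t\<bar> < d"
    by blast
  define e where "e t = (phase g k \<theta> (X t) - \<omega> - 2*pi*mX t) - (phase g k \<theta> (Y t) - \<omega> - 2*pi*mY t)" for t
  define M where "M = (\<Sum>t\<in>{0..<G}. mX t - mY t)"
  have eb: "\<bar>e t\<bar> < 2*d" if "t \<in> {0..<G}" for t
  proof -
    have a: "\<bar>phase g k \<theta> (X t) - \<omega> - 2*pi*mX t\<bar> < d" using mX that by blast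
    have b: "\<bar>phase g k \<theta> (Y t) - \<omega> - 2*pi*mY t\<bar> < d" using mY that by blast
    show ?thesis using a b unfolding e_def by linarith
  qed
  have "(\<Sum>t\<in>{0..<G}. phase g k \<theta> (X t)) - (\<Sum>t\<in>{0..<G}. phase g k \<theta> (Y t)) = real g * \<theta> c"
    using key_identity[OF g c[unfolded cc]] cc unfolding X_def Y_def G_def by simp
  moreover have "(\<Sum>t\<in>{0..<G}. phase g k \<theta> (X t)) - (\<Sum>t\<in>{0..<G}. phase g k \<theta> (Y t))
     = (\<Sum>t\<in>{0..<G}. e t) + 2*pi*real_of_int M"
  proof -
    have "(\<Sum>t\<in>{0..<G}. e t) + 2*pi*real_of_int M = (\<Sum>t\<in>{0..<G}. e t + 2*pi*real_of_int (mX t - mY t))"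
      unfolding M_def by (simp add: sum.distrib sum_distrib_left)
    also have "\<dots> = (\<Sum>t\<in>{0..<G}. phase g k \<theta> (X t) - phase g k \<theta> (Y t))"
      by (rule sum.cong) (auto simp: e_def algebra_simps)
    finally show ?thesis by (simp add: sum_subtractf)
  qed
  ultimately have eq: "real g * \<theta> c = (\<Sum>t\<in>{0..<G}. e t) + 2*pi*real_of_int M" by simp
  have "\<bar>\<Sum>t\<in>{0..<G}. e t\<bar> \<le> (\<Sum>t\<in>{0..<G}. \<bar>e t\<bar>)" by (rule sum_abs)
  also have "\<dots> < (\<Sum>t\<in>{0..<G}. 2*d)"
    using G by (intro sum_strict_mono) (auto intro: eb)
  also have "\<dots> = real g * (2*d)" using G_def by simp
  finally have Eb: "\<bar>\<Sum>t\<in>{0..<G}. e t\<bar> < real g * (2*d)" .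
  define E where "E = (\<Sum>t\<in>{0..<G}. e t) / real g"
  have gpos: "real g > 0" using g by simp
  have Eb2: "\<bar>E\<bar> < 2*d" using Eb gpos by (simp add: E_def abs_divide divide_less_eq mult.commute)
  define n0 where "n0 = M mod G"
  define n where "n = (if 2*n0 < G then n0 else n0 - G)"
  define q where "q = M div G"
  have Mq: "M = n0 + G*q" unfolding n0_def q_def by simp
  have Mn: "M = n + G * (if 2*n0 < G then q else q + 1)"
    using Mq unfolding n_def by (cases "2*n0 < G") (simp_all add: distrib_left)
  define q' where "q' = (if 2*n0 < G then q else q + 1)"
  have n0r: "0 \<le> n0" "n0 < G" using G by (simp_all add: n0_def)
  have n_rng: "- G \<le> 2*n" "2*n < G" unfolding n_def using n0r by auto
  have thc: "\<theta> c = n*(2*pi/real g) + E + 2*pi*q'"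
  proof -
    have RM: "real_of_int M = real_of_int n + real g * real_of_int q'"
      using Mn[folded q'_def] unfolding G_def by simp
    have gE: "real g * E = (\<Sum>t\<in>{0..<G}. e t)" using gpos unfolding E_def by simp
    have "real g * (n*(2*pi/real g) + E + 2*pi*q') = 2*pi*n + real g * E + 2*pi*(real g*q')"
      using gpos by (simp add: distrib_left)
    also have "\<dots> = (\<Sum>t\<in>{0..<G}. e t) + 2*pi*real_of_int M"
      unfolding gE RM by (simp add: distrib_left)
    finally have "real g * \<theta> c = real g * (n*(2*pi/real g) + E + 2*pi*q')"
      using eq by simp
    thus ?thesis using gpos by simp
  qed
  have r1: "-real g \<le> 2 * real_of_int n" "2 * real_of_int n < real g"
    using n_rng unfolding G_def by linarith+
  have "n*(2*pi/real g) = pi * (2*n / real g)" by simp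
  moreover have "-1 \<le> 2*n/real g" "2*n/real g < 1" using r1 gpos by (simp_all add: field_simps)
  moreover have "pi * (-1) \<le> pi * (2*n/real g)" by (rule mult_left_mono) (use calculation in auto)
  moreover have "pi * (2*n/real g) < pi * 1" by (rule mult_strict_left_mono) (use calculation in auto)
  ultimately have "-pi \<le> n*(2*pi/real g)" "n*(2*pi/real g) < pi" by linarith+
  thus ?thesis using thc Eb2 by blast
qed


lemma card_points: "card (points g k) = g ^ k"
  by (simp add: points_def card_PiE)

lemma finite_points: "finite (points g k)"
  by (simp add: points_def finite_PiE)

theorem lemma3p2:
  fixes g k :: nat and \<delta> :: real and \<theta> :: "nat \<times> nat \<times> nat \<Rightarrow> real"
  assumes "g \<ge> 2" and "k \<ge> 2"
    and "0 < \<delta>" and "\<delta> < pi / real g"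
    and "\<theta> \<in> RB g k \<delta>"
  shows "cmod (Phi g k \<theta>) \<le> 1 - 11 / 48 * (1 / real g ^ k) * (\<delta> / 2) ^ 2"
proof -
  have g: "g \<ge> 2" using assms by simp
  have gpos: "real g > 0" using g by simp
  have thbox: "\<theta> \<in> box_d g k" and notB: "\<forall>\<eta>\<in>Lset g k. \<theta> \<notin> Bdelta g k \<delta> \<eta>"
    using assms(5) by (auto simp: RB_def)
  have dpi: "\<delta> \<le> pi/2"
  proof -
    have "pi / real g \<le> pi / 2" using g by (intro divide_left_mono) auto
    thus ?thesis using assms(4) by linarith
  qed
  define \<omega> where "\<omega> = Arg (Phi g k \<theta>)"
  have ex: "\<exists>x0\<in>points g k. \<forall>m::int. \<delta>/2 \<le> \<bar>phase g k \<theta> x0 - \<omega> - 2*pi*m\<bar>"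
  proof (rule ccontr)
    assume "\<not> ?thesis"
    hence H: "\<forall>x\<in>points g k. \<exists>m::int. \<bar>phase g k \<theta> x - \<omega> - 2*pi*m\<bar> < \<delta>/2"
      by (auto simp: not_le)
    have "\<forall>c\<in>coords g k. \<exists>n::int. \<exists>\<zeta>. \<exists>m::int. -pi \<le> n*(2*pi/real g) \<and> n*(2*pi/real g) < pi \<and> \<bar>\<zeta>\<bar> < 2*(\<delta>/2)
           \<and> \<theta> c = n*(2*pi/real g) + \<zeta> + 2*pi*m"
      using near_lattice[OF g _ H] by blast
    from bchoice[OF this] obtain N :: "_ \<Rightarrow> int" where
      N: "\<forall>c\<in>coords g k. \<exists>\<zeta>. \<exists>m::int. -pi \<le> N c*(2*pi/real g) \<and> N c*(2*pi/real g) < pi \<and> \<bar>\<zeta>\<bar> < 2*(\<delta>/2)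
           \<and> \<theta> c = N c*(2*pi/real g) + \<zeta> + 2*pi*m" by blast
    from bchoice[OF N] obtain Z :: "_ \<Rightarrow> real" where
      Z: "\<forall>c\<in>coords g k. \<exists>m::int. -pi \<le> N c*(2*pi/real g) \<and> N c*(2*pi/real g) < pi \<and> \<bar>Z c\<bar> < 2*(\<delta>/2)
           \<and> \<theta> c = N c*(2*pi/real g) + Z c + 2*pi*m" by blast
    define \<eta> where "\<eta> c = real_of_int (N c) * (2*pi/real g)" for c
    have "\<eta> \<in> Lset g k"
      unfolding Lset_def box_d_def using Z by (auto simp: \<eta>_def)
    moreover have "\<theta> \<in> Bdelta g k \<delta> \<eta>"
      unfolding Bdelta_def using thbox Z by (auto simp: \<eta>_def intro!: exI[of _ Z])
    ultimately show False using notB by blast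
  qed
  then obtain x0 where x0: "x0 \<in> points g k" and far: "\<forall>m::int. \<delta>/2 \<le> \<bar>phase g k \<theta> x0 - \<omega> - 2*pi*m\<bar>"
    by blast
  define w where "w = 1 / real g ^ k"
  have wpos: "w > 0" using gpos by (simp add: w_def)
  have Phi_eq: "Phi g k \<theta> = (\<Sum>x\<in>points g k. complex_of_real w * cis (phase g k \<theta> x))"
    by (simp add: Phi_def phase_def w_def)
  have "Phi g k \<theta> = complex_of_real (cmod (Phi g k \<theta>)) * cis \<omega>"
    using rcis_cmod_Arg[of "Phi g k \<theta>"] by (simp add: \<omega>_def rcis_def)
  hence "Phi g k \<theta> * cis (-\<omega>) = complex_of_real (cmod (Phi g k \<theta>))"
    by (metis cis_mult add.right_inverse cis_zero mult.assoc mult.right_neutral)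
  hence "cmod (Phi g k \<theta>) = Re (Phi g k \<theta> * cis (-\<omega>))" by simp
  also have "\<dots> = (\<Sum>x\<in>points g k. w * cos (phase g k \<theta> x - \<omega>))"
    unfolding Phi_eq sum_distrib_right Re_sum
    by (rule sum.cong) (simp_all add: mult.assoc cis_mult)
  also have "\<dots> \<le> (\<Sum>x\<in>points g k. w - (if x = x0 then w * (1 - cos (\<delta>/2)) else 0))"
  proof (rule sum_mono)
    fix x assume "x \<in> points g k"
    show "w * cos (phase g k \<theta> x - \<omega>) \<le> w - (if x = x0 then w * (1 - cos (\<delta>/2)) else 0)"
    proof (cases "x = x0")
      case True
      have "cos (phase g k \<theta> x0 - \<omega>) \<le> cos (\<delta>/2)"
        using far assms(3) dpi pi_gt_zero by (intro cos_far) (auto simp: algebra_simps)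
      thus ?thesis using True wpos by (simp add: algebra_simps)
    next
      case False
      thus ?thesis using wpos by simp
    qed
  qed
  also have "\<dots> = 1 - w * (1 - cos (\<delta>/2))"
    using x0 gpos by (simp add: sum_subtractf finite_points card_points w_def)
  also have "\<dots> \<le> 1 - w * (11/48 * (\<delta>/2)^2)"
  proof -
    have "11/48 * (\<delta>/2)^2 \<le> 1 - cos (\<delta>/2)"
      using assms(3) dpi pi_less_4 by (intro one_minus_cos_bound) auto
    thus ?thesis using wpos by (simp add: mult_left_mono)
  qed
  finally show ?thesis by (simp add: w_def)
qed

end
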